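(* Let $\big((\mathbf{v},\psi,p),(\mathbf{v}',\psi',p')\big)$ be an autonomous MCNF–CCNF pair (as defined in the context). Then for all $\mathbf{x}\in\mathcal{X}$ and $t\ge0$, $$\frac{\mathrm{d}\psi(\mathbf{x},t)}{\mathrm{d}t}\in\mathrm{co}\left\{\mathbf{v}'(\psi(\mathbf{x},t)\mid\mathbf{x}')\ \middle|\ \mathbf{x}'\in\mathcal{X}'\right\},$$ where $\mathrm{co}$ denotes the convex hull.
   Context: Let $\mathcal{X}\subseteq\mathbb{R}^n$ be the state space. A continuous normalizing flow (CNF) on $\mathcal{X}$ is a triple $(\mathbf{v},\psi,p)$ of a continuously differentiable vector field $\mathbf{v}(\mathbf{x},t)$, a flow map $\psi(\mathbf{x},t)$ and time-dependent probability densities $p(\mathbf{x},t)$, $t\ge0$, with $\frac{\mathrm{d}}{\mathrm{d}t}\psi(\mathbf{x},t)=\mathbf{v}(\psi(\mathbf{x},t),t)$ and $\partial_tp=-\nabla_{\mathbf{x}}\cdot(\mathbf{v}p)$. A target density $q'$ lives on a target set $\mathcal{X}'\subset\mathcal{X}$. A conditional CNF (CCNF) is a family of CNFs $(\mathbf{v}'(\cdot\mid\mathbf{x}'),\psi'(\cdot\mid\mathbf{x}'),p'(\cdot\mid\mathbf{x}'))$, $\mathbf{x}'\in\mathcal{X}'$, with $p'(\cdot,T\mid\mathbf{x}')\approx\delta_{\mathbf{x}'}$ for some $T$. An MCNF for it is a CNF $(\mathbf{v},\psi,p)$ with $p(\mathbf{x},t)=\int_{\mathcal{X}'}p'(\mathbf{x},t\mid\mathbf{x}')q'(\mathbf{x}')\mathrm{d}\mathbf{x}'$;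 for such pairs the MCNF vector field is $\mathbf{v}(\mathbf{x},t)=\int_{\mathcal{X}'}\frac{\mathbf{v}'(\mathbf{x},t\mid\mathbf{x}')p'(\mathbf{x},t\mid\mathbf{x}')q'(\mathbf{x}')}{p(\mathbf{x},t)}\mathrm{d}\mathbf{x}'$. An MCNF–CCNF pair is autonomous if $\mathcal{X}=\mathcal{Z}\times\mathcal{T}$, $\mathcal{T}\subset\mathbb{R}$, $\mathbf{x}=(\mathbf{z},\tau)$, $\mathbf{x}'=(\mathbf{z}',\tau')$, $q'=q'_{\mathbf{z}}(\mathbf{z})q'_\tau(\tau)$, the CCNF vector field is time-independent, $\mathbf{v}'(\mathbf{x}\mid\mathbf{x}')=(\mathbf{v}'_{\mathbf{z}}(\mathbf{z}\mid\mathbf{z}'),v'_\tau(\tau\mid\tau'))$, flow map and density split accordingly ($\psi'=(\psi'_{\mathbf{z}},\psi'_\tau)$, $p'=p'_{\mathbf{z}}p'_\tau$), and for some $\tau_0\ne\tau_1$: $q'_\tau=\delta_{\tau_1}$ and $p'_\tau(\tau,t\mid\tau')=\delta_{\psi'_\tau(\tau_0,t\mid\tau')}(\tau)$. *)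

theory Defs
  imports "HOL-Analysis.Analysis"
begin

definition C1_on :: "('a::real_normed_vector \<Rightarrow> 'b::real_normed_vector) \<Rightarrow> 'a set \<Rightarrow> bool" where
  "C1_on f S \<longleftrightarrow> (\<exists>f'. (\<forall>y\<in>S. (f has_derivative blinfun_apply (f' y)) (at y within S))
                     \<and> continuous_on S f')"

definition is_density :: "('a::euclidean_space \<Rightarrow> real) \<Rightarrow> 'a set \<Rightarrow> bool" where
  "is_density q S \<longleftrightarrow> S \<in> sets lborel \<and> (\<forall>x\<in>S. 0 \<le> q x) \<and> set_integrable lborel S q
     \<and> (LINT x:S|lborel. q x) = 1"

definition is_flow :: "'a set \<Rightarrow> ('a::real_normed_vector \<Rightarrow> real \<Rightarrow> 'a) \<Rightarrow> ('a \<Rightarrow> real \<Rightarrow> 'a) \<Rightarrow> bool" where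
  "is_flow X v \<psi> \<longleftrightarrow> (\<forall>x\<in>X. \<psi> x 0 = x \<and>
     (\<forall>t\<ge>0. \<psi> x t \<in> X \<and> ((\<lambda>s. \<psi> x s) has_vector_derivative v (\<psi> x t) t) (at t within {0..})))"

text \<open>Trace of a linear map (divergence = trace of the Jacobian).\<close>
definition lin_trace :: "('a::euclidean_space \<Rightarrow> 'a) \<Rightarrow> real" where
  "lin_trace D = (\<Sum>b\<in>Basis. D b \<bullet> b)"

text \<open>Continuous normalizing flow (v, psi, p) on X: C1 vector field, flow map,
  densities satisfying the continuity equation dp/dt = - div (v p).\<close>
definition CNF :: "'a::euclidean_space set \<Rightarrow> ('a \<Rightarrow> real \<Rightarrow> 'a) \<Rightarrow> ('a \<Rightarrow> real \<Rightarrow> 'a)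
                    \<Rightarrow> ('a \<Rightarrow> real \<Rightarrow> real) \<Rightarrow> bool" where
  "CNF X v \<psi> p \<longleftrightarrow> C1_on (\<lambda>(x, t). v x t) (X \<times> {0..}) \<and> is_flow X v \<psi>
     \<and> (\<forall>t\<ge>0. is_density (\<lambda>x. p x t) X)
     \<and> (\<forall>x\<in>X. \<forall>t\<ge>0. \<exists>D. ((\<lambda>y. p y t *\<^sub>R v y t) has_derivative D) (at x)
            \<and> ((\<lambda>s. p x s) has_real_derivative - lin_trace D) (at t within {0..}))"

definition mix_density :: "'z::euclidean_space set \<Rightarrow> ('z \<Rightarrow> real \<Rightarrow> 'z \<Rightarrow> real)
                            \<Rightarrow> ('z \<Rightarrow> real) \<Rightarrow> 'z \<Rightarrow> real \<Rightarrow> real" where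
  "mix_density Z' pz' qz z t = (LINT z':Z'|lborel. pz' z t z' * qz z')"

definition mcnf_field :: "'z::euclidean_space set \<Rightarrow> ('z \<Rightarrow> 'z \<Rightarrow> 'z) \<Rightarrow> ('z \<Rightarrow> real \<Rightarrow> 'z \<Rightarrow> real)
                            \<Rightarrow> ('z \<Rightarrow> real) \<Rightarrow> 'z \<Rightarrow> real \<Rightarrow> 'z" where
  "mcnf_field Z' vz' pz' qz z t =
     (LINT z':Z'|lborel. ((pz' z t z' * qz z') / mix_density Z' pz' qz z t) *\<^sub>R vz' z z')"

end

theory Submission
  imports Defs "HOL-Probability.Probability"
begin

lemma expectation_in_hull_aux:
  fixes f :: "'b \<Rightarrow> 'a::euclidean_space"
  assumes "prob_space N" "integrable N f" "AE x in N. f x \<in> S" "nat (aff_dim S + 1) = n"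
  shows "integral\<^sup>L N f \<in> convex hull S"
  using assms
proof (induction n arbitrary: S rule: less_induct)
  case (less n)
  interpret N: prob_space N by fact
  note int = less.prems(2)
  define m where "m = integral\<^sup>L N f"
  define C where "C = convex hull S"
  have cC: "convex C" by (simp add: C_def)
  have "S \<noteq> {}"
  proof
    assume "S = {}"
    with less.prems(3) have "AE x in N. False" by simp
    then show False by simp
  qed
  then have "C \<noteq> {}" by (simp add: C_def)
  then have riC: "rel_interior C \<noteq> {}" using rel_interior_eq_empty[OF cC] by simp
  have intl: "integrable N (\<lambda>x. a \<bullet> f x)" for a
    using int by simp
  show ?case
  proof (cases "m \<in> closure C")
    case False
    obtain a b where ab: "a \<bullet> m < b" "\<forall>x\<in>closure C. a \<bullet> x > b"
      using separating_hyperplane_closed_point[OF convex_closure[OF cC] closed_closure False] by blast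
    have "AE x in N. b \<le> a \<bullet> f x"
      using less.prems(3) by eventually_elim
        (use ab hull_subset[of S convex] closure_subset[of C] in \<open>auto simp: C_def intro: less_imp_le\<close>)
    then have "(\<integral>x. b \<partial>N) \<le> (\<integral>x. a \<bullet> f x \<partial>N)"
      by (intro integral_mono_AE) (auto simp: intl)
    then have "b \<le> a \<bullet> m" using int by (simp add: m_def N.prob_space)
    with ab show ?thesis by simp
  next
    case True
    show ?thesis
    proof (cases "m \<in> rel_interior C")
      case True
      then show ?thesis using rel_interior_subset by (auto simp: C_def m_def)
    next
      case False
      obtain a where a: "a \<noteq> 0" "\<And>y. y \<in> closure C \<Longrightarrow> a \<bullet> m \<le> a \<bullet> y"
        "\<And>y. y \<in> rel_interior C \<Longrightarrow> a \<bullet> m < a \<bullet> y"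
        using supporting_hyperplane_relative_frontier[OF cC \<open>m \<in> closure C\<close> False] by blast
      have ge: "AE x in N. 0 \<le> a \<bullet> f x - a \<bullet> m"
        using less.prems(3) by eventually_elim
          (use a(2) hull_subset[of S convex] closure_subset[of C] in \<open>auto simp: C_def\<close>)
      have "(\<integral>x. a \<bullet> f x - a \<bullet> m \<partial>N) = 0"
        using int by (simp add: m_def N.prob_space)
      then have "AE x in N. a \<bullet> f x - a \<bullet> m = 0"
        using integral_nonneg_eq_0_iff_AE[OF _ ge] intl by auto
      then have AE': "AE x in N. f x \<in> S \<inter> {y. a \<bullet> y = a \<bullet> m}"
        using less.prems(3) by eventually_elim auto
      define S' where "S' = S \<inter> {y. a \<bullet> y = a \<bullet> m}"
      have "affine hull S' \<subseteq> {y. a \<bullet> y = a \<bullet> m}"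
        by (intro hull_minimal) (auto simp: S'_def affine_hyperplane)
      moreover obtain r where r: "r \<in> rel_interior C" using riC by blast
      moreover have "r \<in> affine hull S"
        using r rel_interior_subset convex_hull_subset_affine_hull unfolding C_def by blast
      ultimately have ne: "affine hull S' \<noteq> affine hull S" using a(3)[OF r] by auto
      have "affine hull S' \<subseteq> affine hull S" by (intro hull_mono) (auto simp: S'_def)
      with ne have "aff_dim S' < aff_dim S" by (intro aff_dim_psubset) blast
      moreover have "aff_dim S' \<ge> -1" by (simp add: aff_dim_geq)
      ultimately have lt: "nat (aff_dim S' + 1) < n" using less.prems(4) by linarith
      have "m \<in> convex hull S'"
        using less.IH[OF lt less.prems(1,2) AE'[folded S'_def]] by (simp add: m_def)
      then show ?thesis unfolding m_def by (metis S'_def hull_mono inf_le1 subsetD)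
    qed
  qed
qed

lemma mcnf_in_hull:
  fixes Z' :: "'z::euclidean_space set" and vz' :: "'z \<Rightarrow> 'z \<Rightarrow> 'z"
    and pz' :: "'z \<Rightarrow> real \<Rightarrow> 'z \<Rightarrow> real" and qz :: "'z \<Rightarrow> real"
  assumes pnn: "\<And>z'. z' \<in> Z' \<Longrightarrow> 0 \<le> pz' z t z'"
    and qnn: "\<And>z'. z' \<in> Z' \<Longrightarrow> 0 \<le> qz z'"
    and pi: "set_integrable lborel Z' (\<lambda>z'. pz' z t z' * qz z')"
    and pos: "mix_density Z' pz' qz z t > 0"
    and vi: "set_integrable lborel Z'
        (\<lambda>z'. ((pz' z t z' * qz z') / mix_density Z' pz' qz z t) *\<^sub>R vz' z z')"
  shows "mcnf_field Z' vz' pz' qz z t \<in> convex hull {vz' z z' | z'. z' \<in> Z'}"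
proof -
  define c where "c = mix_density Z' pz' qz z t"
  define W where "W = (\<lambda>z'. indicator Z' z' * (pz' z t z' * qz z') / c)"
  define h where "h = (\<lambda>z'. indicator Z' z' *\<^sub>R (((pz' z t z' * qz z') / c) *\<^sub>R vz' z z'))"
  define F where "F = (\<lambda>z'. inverse (W z') *\<^sub>R h z')"
  define N where "N = density lborel W"
  have c0: "c > 0" using pos by (simp add: c_def)
  have iW0: "integrable lborel (\<lambda>z'. indicator Z' z' *\<^sub>R (pz' z t z' * qz z'))"
    using pi by (simp add: set_integrable_def)
  have iW: "integrable lborel W"
    using integrable_divide[OF iW0, of c] by (simp add: W_def)
  have Wm[measurable]: "W \<in> borel_measurable lborel" using iW by auto
  have ih: "integrable lborel h" using vi by (simp add: set_integrable_def h_def c_def)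
  have hm[measurable]: "h \<in> borel_measurable lborel" using ih by auto
  have Fm[measurable]: "F \<in> borel_measurable lborel" unfolding F_def by measurable
  have Wnn: "0 \<le> W x" for x using pnn qnn c0 by (auto simp: W_def indicator_def)
  have WF: "W x *\<^sub>R F x = h x" for x
    by (cases "W x = 0") (auto simp: F_def h_def W_def indicator_def split: if_splits)
  have intW: "integral\<^sup>L lborel W = 1"
  proof -
    have "integral\<^sup>L lborel W = (\<integral>z'. indicator Z' z' *\<^sub>R (pz' z t z' * qz z') \<partial>lborel) / c"
      by (simp add: W_def)
    also have "\<dots> = 1" using c0 by (simp add: c_def mix_density_def set_lebesgue_integral_def)
    finally show ?thesis .
  qed
  have "emeasure N (space N) = 1"
    unfolding N_def
    by (simp add: emeasure_density nn_integral_eq_integral[OF iW] Wnn intW)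
  then have P: "prob_space N" by (rule prob_spaceI)
  have iF: "integrable N F"
    unfolding N_def by (subst integrable_density) (auto simp: Wnn WF ih)
  have eq: "integral\<^sup>L N F = mcnf_field Z' vz' pz' qz z t"
    unfolding N_def
    by (subst integral_density) (auto simp: Wnn WF h_def mcnf_field_def set_lebesgue_integral_def c_def)
  have AE: "AE x in N. F x \<in> {vz' z z' | z'. z' \<in> Z'}"
  proof -
    have pt: "F x \<in> {vz' z z' | z'. z' \<in> Z'}" if "0 < W x" for x
    proof -
      have xZ: "x \<in> Z'" using that by (cases "x \<in> Z'") (auto simp: W_def)
      have "W x = (pz' z t x * qz x) / c" using xZ by (simp add: W_def)
      then have "F x = vz' z x" using that xZ c0 by (auto simp: F_def h_def)
      then show ?thesis using xZ by blast
    qed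
    show ?thesis unfolding N_def
      using pt by (subst AE_density) (auto intro!: AE_I2)
  qed
  show ?thesis
    using expectation_in_hull_aux[OF P iF AE refl] eq by simp
qed



theorem corollary4p14:
  fixes Z Z' :: "'z::euclidean_space set" and T T' :: "real set"
    and vz' :: "'z \<Rightarrow> 'z \<Rightarrow> 'z" and \<psi>z' :: "'z \<Rightarrow> real \<Rightarrow> 'z \<Rightarrow> 'z"
    and pz' :: "'z \<Rightarrow> real \<Rightarrow> 'z \<Rightarrow> real" and qz :: "'z \<Rightarrow> real"
    and vt' :: "real \<Rightarrow> real \<Rightarrow> real" and \<psi>t' :: "real \<Rightarrow> real \<Rightarrow> real \<Rightarrow> real"
    and \<tau>0 \<tau>1 :: real
    and \<psi> :: "'z \<times> real \<Rightarrow> real \<Rightarrow> 'z \<times> real"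
  assumes ZZ': "Z' \<subseteq> Z" and TT': "T' \<subseteq> T"
    and tau0: "\<tau>0 \<in> T" and tau1: "\<tau>1 \<in> T'" and tau01: "\<tau>0 \<noteq> \<tau>1"
    and CCNF_z: "\<And>z'. z' \<in> Z' \<Longrightarrow>
        CNF Z (\<lambda>z t. vz' z z') (\<lambda>z t. \<psi>z' z t z') (\<lambda>z t. pz' z t z')"
    and CCNF_tau_C1: "\<And>\<tau>'. \<tau>' \<in> T' \<Longrightarrow> C1_on (\<lambda>(\<tau>, t::real). vt' \<tau> \<tau>') (T \<times> {0..})"
    and CCNF_tau_flow: "\<And>\<tau>'. \<tau>' \<in> T' \<Longrightarrow> is_flow T (\<lambda>\<tau> t. vt' \<tau> \<tau>') (\<lambda>\<tau> t. \<psi>t' \<tau> t \<tau>')"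
    and q_dens: "is_density qz Z'"
    and p_int: "\<And>z t. z \<in> Z \<Longrightarrow> t \<ge> 0 \<Longrightarrow> set_integrable lborel Z' (\<lambda>z'. pz' z t z' * qz z')"
    and p_pos: "\<And>z t. z \<in> Z \<Longrightarrow> t \<ge> 0 \<Longrightarrow> mix_density Z' pz' qz z t > 0"
    and v_int: "\<And>z t. z \<in> Z \<Longrightarrow> t \<ge> 0 \<Longrightarrow> set_integrable lborel Z'
        (\<lambda>z'. ((pz' z t z' * qz z') / mix_density Z' pz' qz z t) *\<^sub>R vz' z z')"
    and MCNF_C1: "C1_on (\<lambda>(x, t). (mcnf_field Z' vz' pz' qz (fst x) t, vt' (snd x) \<tau>1)) ((Z \<times> T) \<times> {0..})"
    and MCNF_flow: "is_flow (Z \<times> T)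
        (\<lambda>x t. (mcnf_field Z' vz' pz' qz (fst x) t, vt' (snd x) \<tau>1)) \<psi>"
  shows "\<forall>x\<in>Z \<times> T. \<forall>t\<ge>0.
     vector_derivative (\<lambda>s. \<psi> x s) (at t within {0..}) \<in>
       convex hull {(vz' (fst (\<psi> x t)) z', vt' (snd (\<psi> x t)) \<tau>') | z' \<tau>'. z' \<in> Z' \<and> \<tau>' \<in> T'}"
proof (intro ballI allI impI)
  fix x t assume x: "x \<in> Z \<times> T" and t: "(t::real) \<ge> 0"
  have fl: "\<psi> x t \<in> Z \<times> T" and
    d: "((\<lambda>s. \<psi> x s) has_vector_derivative
          (mcnf_field Z' vz' pz' qz (fst (\<psi> x t)) t, vt' (snd (\<psi> x t)) \<tau>1)) (at t within {0..})"
    using MCNF_flow x t unfolding is_flow_def by auto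
  have nb: "at t within {0::real..} \<noteq> bot"
  proof -
    have "t islimpt {0::real..}"
    proof (rule islimpt_subset)
      show "t islimpt {t..t+1}" by (simp add: islimpt_Icc)
      show "{t..t+1} \<subseteq> {0::real..}" using t by auto
    qed
    then show ?thesis by (simp add: trivial_limit_within)
  qed
  define z where "z = fst (\<psi> x t)"
  have zZ: "z \<in> Z" using fl by (auto simp: z_def)
  have pnn: "0 \<le> pz' z t z'" if "z' \<in> Z'" for z'
    using CCNF_z[OF that] zZ t unfolding CNF_def is_density_def by auto
  have qnn: "0 \<le> qz z'" if "z' \<in> Z'" for z'
    using q_dens that unfolding is_density_def by auto
  have H: "mcnf_field Z' vz' pz' qz z t \<in> convex hull {vz' z z' | z'. z' \<in> Z'}"
    by (rule mcnf_in_hull[where Z'=Z' and pz'=pz' and z=z and t=t and qz=qz and vz'=vz',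
          OF pnn qnn p_int[OF zZ t] p_pos[OF zZ t] v_int[OF zZ t]])
  have "(mcnf_field Z' vz' pz' qz z t, vt' (snd (\<psi> x t)) \<tau>1)
      \<in> convex hull ({vz' z z' | z'. z' \<in> Z'} \<times> {vt' (snd (\<psi> x t)) \<tau>1})"
    using H by (simp add: convex_hull_Times)
  moreover have "{vz' z z' | z'. z' \<in> Z'} \<times> {vt' (snd (\<psi> x t)) \<tau>1}
      \<subseteq> {(vz' (fst (\<psi> x t)) z', vt' (snd (\<psi> x t)) \<tau>') | z' \<tau>'. z' \<in> Z' \<and> \<tau>' \<in> T'}"
    using tau1 by (auto simp: z_def)
  ultimately have "(mcnf_field Z' vz' pz' qz z t, vt' (snd (\<psi> x t)) \<tau>1)
      \<in> convex hull {(vz' (fst (\<psi> x t)) z', vt' (snd (\<psi> x t)) \<tau>') | z' \<tau>'. z' \<in> Z' \<and> \<tau>' \<in> T'}"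
    by (meson hull_mono subsetD)
  then show "vector_derivative (\<lambda>s. \<psi> x s) (at t within {0..}) \<in>
       convex hull {(vz' (fst (\<psi> x t)) z', vt' (snd (\<psi> x t)) \<tau>') | z' \<tau>'. z' \<in> Z' \<and> \<tau>' \<in> T'}"
    using vector_derivative_within[OF nb d] by (simp add: z_def)
qed

end
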